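(* Let $\Gamma$ be a rational smooth affine curve and let $\sigma\in\mathrm{Aut}(\Gamma)$ be an automorphism of order $2$. Then there exist a closed embedding $\tau\colon\Gamma\to\mathbb{A}^2$ and an automorphism $\hat\sigma\in\mathrm{Aut}(\mathbb{A}^2)$ of order $2$ such that $\hat\sigma\circ\tau=\tau\circ\sigma$.
   Context: All varieties are over $\mathbb{C}$. A rational smooth affine curve is a smooth affine curve isomorphic to $\mathbb{P}^1\setminus\Lambda$ for some non-empty finite set $\Lambda\subset\mathbb{P}^1$. *)

theory Defs
  imports "HOL-Computational_Algebra.Polynomial"
begin

text \<open>Model of a rational smooth affine curve: P^1 minus a non-empty finite set Lambda.
  Moving a point of Lambda to infinity, this is C minus a finite set F
  (F = Lambda minus infinity).\<close>

definition curve :: "complex set \<Rightarrow> complex set" where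
  "curve F = UNIV - F"

definition regular_on :: "complex set \<Rightarrow> (complex \<Rightarrow> complex) \<Rightarrow> bool" where
  "regular_on S h \<longleftrightarrow> (\<exists>p q :: complex poly. \<forall>z\<in>S. poly q z \<noteq> 0 \<and> h z = poly p z / poly q z)"

definition curve_morphism :: "complex set \<Rightarrow> (complex \<Rightarrow> complex) \<Rightarrow> bool" where
  "curve_morphism S f \<longleftrightarrow> f ` S \<subseteq> S \<and> regular_on S f"

definition curve_aut :: "complex set \<Rightarrow> (complex \<Rightarrow> complex) \<Rightarrow> bool" where
  "curve_aut S f \<longleftrightarrow> curve_morphism S f \<and>
     (\<exists>g. curve_morphism S g \<and> (\<forall>z\<in>S. g (f z) = z \<and> f (g z) = z))"

definition curve_involution :: "complex set \<Rightarrow> (complex \<Rightarrow> complex) \<Rightarrow> bool" where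
  "curve_involution S f \<longleftrightarrow> curve_aut S f \<and> (\<forall>z\<in>S. f (f z) = z) \<and> (\<exists>z\<in>S. f z \<noteq> z)"

text \<open>Polynomials in two variables x, y over C are represented as complex poly poly:
  an (outer) polynomial in y with coefficients in C[x].\<close>
definition eval2 :: "complex poly poly \<Rightarrow> complex \<Rightarrow> complex \<Rightarrow> complex" where
  "eval2 P x y = poly (map_poly (\<lambda>c. poly c x) P) y"

definition poly_map2 :: "complex poly poly \<Rightarrow> complex poly poly \<Rightarrow> complex \<times> complex \<Rightarrow> complex \<times> complex" where
  "poly_map2 P Q = (\<lambda>(x, y). (eval2 P x y, eval2 Q x y))"

definition A2_aut :: "(complex \<times> complex \<Rightarrow> complex \<times> complex) \<Rightarrow> bool" where
  "A2_aut \<Phi> \<longleftrightarrow> (\<exists>P Q R T. \<Phi> = poly_map2 P Q \<and>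
      (\<forall>v. poly_map2 R T (\<Phi> v) = v \<and> \<Phi> (poly_map2 R T v) = v))"

definition A2_involution :: "(complex \<times> complex \<Rightarrow> complex \<times> complex) \<Rightarrow> bool" where
  "A2_involution \<Phi> \<longleftrightarrow> A2_aut \<Phi> \<and> \<Phi> \<circ> \<Phi> = id \<and> \<Phi> \<noteq> id"

text \<open>Closed embedding tau = (f, g) : S -> A^2 of the affine curve S: f, g regular and the
  comorphism C[x,y] -> O(S) is surjective (every regular function on S is a polynomial
  in f and g).\<close>
definition closed_embedding_A2 :: "complex set \<Rightarrow> (complex \<Rightarrow> complex \<times> complex) \<Rightarrow> bool" where
  "closed_embedding_A2 S \<tau> \<longleftrightarrow> regular_on S (fst \<circ> \<tau>) \<and> regular_on S (snd \<circ> \<tau>) \<and>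
     (\<forall>h. regular_on S h \<longrightarrow> (\<exists>P. \<forall>z\<in>S. h z = eval2 P (fst (\<tau> z)) (snd (\<tau> z))))"

end

theory Submission
  imports Defs "HOL-Computational_Algebra.Fundamental_Theorem_Algebra" "HOL-Computational_Algebra.Polynomial_Factorial" "HOL-Computational_Algebra.Field_as_Ring"
begin


lemma mp_add: "map_poly (\<lambda>c. poly c x) (P + Q) = map_poly (\<lambda>c. poly c x) P + map_poly (\<lambda>c. poly c x) Q"
  by (rule poly_eqI) (simp add: coeff_map_poly)

lemma mp_mult: "map_poly (\<lambda>c. poly c x) (P * Q) = map_poly (\<lambda>c. poly c x) P * map_poly (\<lambda>c. poly c x) Q"
  by (rule poly_eqI) (simp add: coeff_map_poly coeff_mult poly_sum)

lemma eval2_add: "eval2 (P + Q) x y = eval2 P x y + eval2 Q x y"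
  by (simp add: eval2_def mp_add)
lemma eval2_mult: "eval2 (P * Q) x y = eval2 P x y * eval2 Q x y"
  by (simp add: eval2_def mp_mult)
lemma eval2_const: "eval2 [:[:c:]:] x y = c"
  by (simp add: eval2_def map_poly_pCons)
lemma eval2_x: "eval2 [:[:0,1:]:] x y = x"
  by (simp add: eval2_def map_poly_pCons)
lemma eval2_y: "eval2 [:0,1:] x y = y"
  by (simp add: eval2_def map_poly_pCons)

definition alg :: "complex set \<Rightarrow> (complex \<Rightarrow> complex \<times> complex) \<Rightarrow> (complex \<Rightarrow> complex) \<Rightarrow> bool" where
  "alg S \<tau> h \<longleftrightarrow> (\<exists>P. \<forall>z\<in>S. h z = eval2 P (fst (\<tau> z)) (snd (\<tau> z)))"

lemma alg_const: "alg S \<tau> (\<lambda>z. c)"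
  unfolding alg_def by (rule exI[of _ "[:[:c:]:]"]) (simp add: eval2_const)
lemma alg_fst: "alg S \<tau> (\<lambda>z. fst (\<tau> z))"
  unfolding alg_def by (rule exI[of _ "[:[:0,1:]:]"]) (simp add: eval2_x)
lemma alg_snd: "alg S \<tau> (\<lambda>z. snd (\<tau> z))"
  unfolding alg_def by (rule exI[of _ "[:0,1:]"]) (simp add: eval2_y)
lemma alg_add: "alg S \<tau> f \<Longrightarrow> alg S \<tau> g \<Longrightarrow> alg S \<tau> (\<lambda>z. f z + g z)"
  unfolding alg_def by (metis eval2_add)
lemma alg_mult: "alg S \<tau> f \<Longrightarrow> alg S \<tau> g \<Longrightarrow> alg S \<tau> (\<lambda>z. f z * g z)"
  unfolding alg_def by (metis eval2_mult)
lemma alg_cong: "alg S \<tau> f \<Longrightarrow> (\<And>z. z \<in> S \<Longrightarrow> f z = g z) \<Longrightarrow> alg S \<tau> g"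
  unfolding alg_def by metis
lemma alg_diff: "alg S \<tau> f \<Longrightarrow> alg S \<tau> g \<Longrightarrow> alg S \<tau> (\<lambda>z. f z - g z)"
proof -
  assume f: "alg S \<tau> f" and g: "alg S \<tau> g"
  have "alg S \<tau> (\<lambda>z. f z + (-1) * g z)"
    by (intro alg_add alg_mult f g alg_const)
  then show ?thesis by (rule alg_cong) simp
qed
lemma alg_poly: "alg S \<tau> f \<Longrightarrow> alg S \<tau> (\<lambda>z. poly p (f z))"
proof (induction p)
  case 0 then show ?case using alg_const[of S \<tau> 0] by simp
next
  case (pCons a p)
  then have "alg S \<tau> (\<lambda>z. a + f z * poly p (f z))"
    by (intro alg_add alg_mult alg_const) auto
  then show ?case by simp
qed
lemma alg_prod: "finite A \<Longrightarrow> (\<And>a. a \<in> A \<Longrightarrow> alg S \<tau> (g a)) \<Longrightarrow> alg S \<tau> (\<lambda>z. \<Prod>a\<in>A. g a z)"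
proof (induction A rule: finite_induct)
  case empty then show ?case using alg_const[of S \<tau> 1] by simp
next
  case (insert x A)
  then have "alg S \<tau> (\<lambda>z. g x z * (\<Prod>a\<in>A. g a z))" by (intro alg_mult) auto
  then show ?case using insert by simp
qed

lemma reg_const: "regular_on S (\<lambda>z. c)"
  unfolding regular_on_def by (rule exI[of _ "[:c:]"], rule exI[of _ 1]) simp
lemma reg_id: "regular_on S (\<lambda>z. z)"
  unfolding regular_on_def by (rule exI[of _ "[:0,1:]"], rule exI[of _ 1]) simp
lemma reg_cong: "regular_on S f \<Longrightarrow> (\<And>z. z \<in> S \<Longrightarrow> f z = g z) \<Longrightarrow> regular_on S g"
  unfolding regular_on_def by metis
lemma reg_add: "regular_on S f \<Longrightarrow> regular_on S g \<Longrightarrow> regular_on S (\<lambda>z. f z + g z)"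
proof -
  assume "regular_on S f" "regular_on S g"
  then obtain p1 q1 p2 q2 where 1: "\<forall>z\<in>S. poly q1 z \<noteq> 0 \<and> f z = poly p1 z / poly q1 z"
    and 2: "\<forall>z\<in>S. poly q2 z \<noteq> 0 \<and> g z = poly p2 z / poly q2 z"
    unfolding regular_on_def by blast
  show ?thesis unfolding regular_on_def
    apply (rule exI[of _ "p1 * q2 + p2 * q1"], rule exI[of _ "q1 * q2"])
    using 1 2 by (simp add: add_frac_eq)
qed
lemma reg_mult: "regular_on S f \<Longrightarrow> regular_on S g \<Longrightarrow> regular_on S (\<lambda>z. f z * g z)"
proof -
  assume "regular_on S f" "regular_on S g"
  then obtain p1 q1 p2 q2 where 1: "\<forall>z\<in>S. poly q1 z \<noteq> 0 \<and> f z = poly p1 z / poly q1 z"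
    and 2: "\<forall>z\<in>S. poly q2 z \<noteq> 0 \<and> g z = poly p2 z / poly q2 z"
    unfolding regular_on_def by blast
  show ?thesis unfolding regular_on_def
    apply (rule exI[of _ "p1 * p2"], rule exI[of _ "q1 * q2"])
    using 1 2 by (simp add: times_divide_times_eq)
qed
lemma reg_inv: "regular_on S f \<Longrightarrow> (\<And>z. z \<in> S \<Longrightarrow> f z \<noteq> 0) \<Longrightarrow> regular_on S (\<lambda>z. 1 / f z)"
proof -
  assume "regular_on S f" and nz: "\<And>z. z \<in> S \<Longrightarrow> f z \<noteq> 0"
  then obtain p1 q1 where 1: "\<forall>z\<in>S. poly q1 z \<noteq> 0 \<and> f z = poly p1 z / poly q1 z"
    unfolding regular_on_def by blast
  show ?thesis unfolding regular_on_def
    apply (rule exI[of _ "q1"], rule exI[of _ "p1"])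
    using 1 nz by auto
qed
lemma reg_diff: "regular_on S f \<Longrightarrow> regular_on S g \<Longrightarrow> regular_on S (\<lambda>z. f z - g z)"
proof -
  assume f: "regular_on S f" and g: "regular_on S g"
  have "regular_on S (\<lambda>z. f z + (-1) * g z)"
    by (intro reg_add reg_mult f g reg_const)
  then show ?thesis by (rule reg_cong) simp
qed
lemma reg_div: "regular_on S f \<Longrightarrow> regular_on S g \<Longrightarrow> (\<And>z. z \<in> S \<Longrightarrow> g z \<noteq> 0) \<Longrightarrow> regular_on S (\<lambda>z. f z / g z)"
proof -
  assume f: "regular_on S f" and g: "regular_on S g" and nz: "\<And>z. z \<in> S \<Longrightarrow> g z \<noteq> 0"
  have "regular_on S (\<lambda>z. f z * (1 / g z))"
    by (intro reg_mult f reg_inv g nz)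
  then show ?thesis by (rule reg_cong) simp
qed
lemma reg_poly: "regular_on S f \<Longrightarrow> regular_on S (\<lambda>z. poly p (f z))"
proof (induction p)
  case 0 then show ?case using reg_const[of S 0] by simp
next
  case (pCons a p)
  then have "regular_on S (\<lambda>z. a + f z * poly p (f z))"
    by (intro reg_add reg_mult reg_const) auto
  then show ?case by simp
qed

lemma alg_ratfun:
  assumes z: "alg S \<tau> (\<lambda>z. z)" and inv: "\<And>a. a \<notin> S \<Longrightarrow> alg S \<tau> (\<lambda>z. 1 / (z - a))"
    and ne: "S \<noteq> {}"
  shows "(\<forall>z\<in>S. poly q z \<noteq> 0) \<Longrightarrow> alg S \<tau> (\<lambda>z. poly p z / poly q z)"
proof (induction "degree q" arbitrary: q p rule: less_induct)
  case less
  show ?case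
  proof (cases "degree q = 0")
    case True
    then obtain c where q: "q = [:c:]" by (metis degree_eq_zeroE)
    from ne obtain z0 where "z0 \<in> S" by auto
    with less.prems q have c: "c \<noteq> 0" by auto
    have "alg S \<tau> (\<lambda>z. poly (smult (1/c) p) z)" by (rule alg_poly[OF z])
    then show ?thesis by (rule alg_cong) (simp add: q)
  next
    case False
    then have "\<not> constant (poly q)" by (simp add: constant_degree)
    then obtain r where r: "poly q r = 0" using fundamental_theorem_of_algebra by blast
    then have rS: "r \<notin> S" using less.prems by auto
    from r obtain q1 where q1: "q = [:-r,1:] * q1" by (metis poly_eq_0_iff_dvd dvdE)
    have q10: "q1 \<noteq> 0" using q1 False by auto
    have "degree q = degree [:-r,1:] + degree q1" unfolding q1 by (rule degree_mult_eq) (use q10 in auto)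
    then have dq: "degree q1 < degree q" by simp
    have nz1: "\<forall>z\<in>S. poly q1 z \<noteq> 0" using less.prems q1 by auto
    have "alg S \<tau> (\<lambda>z. 1 / (z - r) * (poly p z / poly q1 z))"
      by (intro alg_mult inv rS less.hyps dq nz1)
    then show ?thesis by (rule alg_cong) (simp add: q1 algebra_simps)
  qed
qed

lemma embed:
  assumes "finite F" "regular_on (curve F) (fst \<circ> \<tau>)" "regular_on (curve F) (snd \<circ> \<tau>)"
    "alg (curve F) \<tau> (\<lambda>z. z)" "\<And>a. a \<in> F \<Longrightarrow> alg (curve F) \<tau> (\<lambda>z. 1 / (z - a))"
  shows "closed_embedding_A2 (curve F) \<tau>"
proof -
  have ne: "curve F \<noteq> {}" using assms(1) unfolding curve_def
    using ex_new_if_finite[OF infinite_UNIV_char_0 assms(1)] by auto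
  { fix h assume "regular_on (curve F) h"
    then obtain p q where pq: "\<forall>z\<in>curve F. poly q z \<noteq> 0 \<and> h z = poly p z / poly q z"
      unfolding regular_on_def by blast
    have "alg (curve F) \<tau> (\<lambda>z. poly p z / poly q z)"
      by (rule alg_ratfun[OF assms(4) _ ne]) (use assms(5) pq in \<open>auto simp: curve_def\<close>)
    then have "alg (curve F) \<tau> h" by (rule alg_cong) (use pq in auto)
  }
  then show ?thesis using assms unfolding closed_embedding_A2_def alg_def by blast
qed



lemma no_common_root:
  fixes p q :: "complex poly"
  assumes "coprime p q" "poly p r = 0" "poly q r = 0" shows False
proof -
  have "[:-r,1:] dvd p" "[:-r,1:] dvd q" using assms poly_eq_0_iff_dvd by auto
  then have "is_unit [:-r,1:]" using assms(1) coprime_common_divisor by blast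
  then show False by (subst (asm) is_unit_iff_degree) auto
qed

lemma deg_le1:
  fixes p q :: "complex poly" and F :: "complex set"
  assumes fin: "finite F" and cop: "coprime p q"
    and nz: "\<forall>z\<in>UNIV - F. poly q z \<noteq> 0"
    and inj: "inj_on (\<lambda>z. poly p z / poly q z) (UNIV - F)"
  shows "degree p \<le> 1 \<and> degree q \<le> 1"
proof -
  define S where "S = UNIV - F"
  define \<sigma> where "\<sigma> = (\<lambda>z. poly p z / poly q z)"
  have infS: "infinite S" unfolding S_def using fin
    using Diff_infinite_finite[OF fin infinite_UNIV_char_0] by simp
  have injS: "inj_on \<sigma> S" using inj unfolding S_def \<sigma>_def .
  define W where "W = pderiv p * q - p * pderiv q"
  have W0: "W \<noteq> 0"
  proof
    assume "W = 0"
    then have eq: "pderiv p * q = p * pderiv q" unfolding W_def by (simp only: right_minus_eq)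
    have "q dvd p * pderiv q" unfolding eq[symmetric] by (rule dvd_triv_right)
    moreover have "coprime q p" using cop by (rule coprime_commute[THEN iffD1])
    ultimately have "q dvd pderiv q" using coprime_dvd_mult_right_iff[of q p "pderiv q"] by blast
    moreover have "q \<noteq> 0"
    proof
      assume "q = 0"
      obtain z where "z \<in> S" using infS by (metis finite.emptyI equals0I)
      then show False using nz \<open>q = 0\<close> unfolding S_def by simp
    qed
    ultimately have "pderiv q = 0"
    proof -
      assume d: "q dvd pderiv q" and "q \<noteq> 0"
      show "pderiv q = 0"
      proof (rule ccontr)
        assume n: "pderiv q \<noteq> 0"
        then have "degree q \<le> degree (pderiv q)" using d dvd_imp_degree_le by blast
        moreover have "degree q \<noteq> 0" using n pderiv_eq_0_iff by blast
        ultimately show False by (simp add: degree_pderiv)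
      qed
    qed
    then have dq: "degree q = 0" using pderiv_eq_0_iff by blast
    have "pderiv p * q = 0" by (simp only: eq \<open>pderiv q = 0\<close> mult_zero_right)
    then have "pderiv p = 0" using \<open>q \<noteq> 0\<close> by (simp only: mult_eq_0_iff) blast
    then have dp: "degree p = 0" using pderiv_eq_0_iff by blast
    obtain a1 where a1: "p = [:a1:]" using dp degree_eq_zeroE by blast
    obtain a2 where a2: "q = [:a2:]" using dq degree_eq_zeroE by blast
    have const: "\<And>z. \<sigma> z = \<sigma> 0" unfolding \<sigma>_def a1 a2 by simp
    obtain z1 where z1: "z1 \<in> S" using infS by (metis finite.emptyI equals0I)
    have "infinite (S - {z1})" using infS by simp
    then obtain z2 where z2: "z2 \<in> S - {z1}" by (metis finite.emptyI equals0I)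
    have "z1 = z2" using inj_onD[OF injS const[of z1, unfolded const[of z2, symmetric]]] z1 z2 by blast
    then show False using z2 by auto
  qed
  define B where "B = (\<lambda>a. poly p a / poly q a) ` F \<union> \<sigma> ` {x. poly W x = 0}"
  have finB: "finite B" unfolding B_def using fin poly_roots_finite[OF W0] by simp
  have key: "degree (p - smult c q) \<le> 1" if cB: "c \<notin> B" for c
  proof (rule ccontr)
    define f where "f = p - smult c q"
    assume "\<not> degree (p - smult c q) \<le> 1"
    then have df: "degree f \<ge> 2" unfolding f_def by simp
    have rootS: "r \<in> S \<and> \<sigma> r = c" if "poly f r = 0" for r
    proof -
      have pr: "poly p r = c * poly q r" using that unfolding f_def by simp
      have qr: "poly q r \<noteq> 0" using no_common_root[OF cop] pr by auto
      have cr: "c = poly p r / poly q r" using pr qr by simp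
      have "r \<notin> F"
      proof
        assume "r \<in> F"
        then have "c \<in> B" unfolding B_def cr by blast
        then show False using cB by blast
      qed
      then show ?thesis unfolding S_def \<sigma>_def using pr qr by auto
    qed
    have "\<not> constant (poly f)" using df by (simp add: constant_degree)
    then obtain r where r: "poly f r = 0" using fundamental_theorem_of_algebra by blast
    then obtain g where g: "f = [:-r,1:] * g" by (metis poly_eq_0_iff_dvd dvdE)
    have "g \<noteq> 0" using g df by auto
    have "degree f = 1 + degree g" unfolding g by (subst degree_mult_eq) (use \<open>g \<noteq> 0\<close> in auto)
    then have "\<not> constant (poly g)" using df by (simp add: constant_degree)
    then obtain r' where r': "poly g r' = 0" using fundamental_theorem_of_algebra by blast
    then have "poly f r' = 0" using g by simp
    then have "r' \<in> S" "\<sigma> r' = \<sigma> r" "r \<in> S" using rootS[of r'] rootS[OF r] by auto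
    then have "r' = r" using inj_onD[OF injS] by blast
    then obtain h where h: "g = [:-r,1:] * h" using r' by (metis poly_eq_0_iff_dvd dvdE)
    have fd: "poly (pderiv f) r = 0"
    proof -
      define l where "l = [:-r,1:]"
      have l0: "poly l r = 0" unfolding l_def by simp
      have "f = l * (l * h)" unfolding g h l_def ..
      then have "pderiv f = l * pderiv (l * h) + (l * h) * pderiv l" by (simp only: pderiv_mult)
      then show ?thesis by (simp only: poly_add poly_mult l0 mult_zero_left add_0)
    qed
    have e1: "poly (pderiv f) r = poly (pderiv p) r - c * poly (pderiv q) r"
      unfolding f_def by (simp add: pderiv_diff pderiv_smult)
    have e2: "poly f r = poly p r - c * poly q r" unfolding f_def by simp
    have e3: "poly W r = poly (pderiv p) r * poly q r - poly p r * poly (pderiv q) r" unfolding W_def by simp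
    have "poly W r = poly (pderiv f) r * poly q r - poly f r * poly (pderiv q) r"
      unfolding e1 e2 e3 by algebra
    then have W0r: "poly W r = 0" by (simp only: fd r mult_zero_left diff_zero)
    have cs: "c = \<sigma> r" using rootS[OF r] by simp
    have "r \<in> {x. poly W x = 0}" using W0r by simp
    then have "\<sigma> r \<in> \<sigma> ` {x. poly W x = 0}" by (rule imageI)
    then have "c \<in> B" unfolding B_def cs by (rule UnI2)
    then show False using cB by (rule notE[rotated])
  qed
  obtain c1 where c1: "c1 \<notin> B" using ex_new_if_finite[OF infinite_UNIV_char_0 finB] by auto
  obtain c2 where c2: "c2 \<notin> insert c1 B" using ex_new_if_finite[OF infinite_UNIV_char_0] finB by blast
  have cz: "coeff p n = 0 \<and> coeff q n = 0" if "n > 1" for n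
  proof -
    have "c2 \<notin> B" using c2 by simp
    have "coeff (p - smult c1 q) n = 0" by (rule coeff_eq_0) (use key[OF c1] that in linarith)
    moreover have "coeff (p - smult c2 q) n = 0" by (rule coeff_eq_0) (use key[OF \<open>c2 \<notin> B\<close>] that in linarith)
    ultimately have "coeff p n = c1 * coeff q n" "coeff p n = c2 * coeff q n" by auto
    then have e1: "coeff p n = c1 * coeff q n" and "(c1 - c2) * coeff q n = 0" by (auto simp add: algebra_simps)
    then have "coeff q n = 0" using c2 by auto
    then show ?thesis using e1 by simp
  qed
  show ?thesis using cz by (auto intro!: degree_le)
qed



lemma lin_poly: "degree (p::complex poly) \<le> 1 \<Longrightarrow> poly p z = coeff p 0 + coeff p 1 * z"
proof -
  assume d: "degree p \<le> 1"
  have "p = pCons (coeff p 0) (pCons (coeff p 1) 0)"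
  proof (rule poly_eqI)
    fix n show "coeff p n = coeff (pCons (coeff p 0) (pCons (coeff p 1) 0)) n"
    proof (cases n)
      case (Suc m) then show ?thesis
        by (cases m) (auto intro!: coeff_eq_0 simp: d intro: le_less_trans[OF d])
    qed simp
  qed
  then show ?thesis by (metis mult.commute poly_pCons poly_0 add_0_right mult_zero_right)
qed

lemma alg1:
  fixes a c z1 z2 :: complex
  assumes "c + a*(c + a*z1) = z1" "c + a*(c + a*z2) = z2" "z1 \<noteq> z2"
  shows "a = 1 \<or> a = -1"
proof -
  have "(a*a - 1)*(z1 - z2) = (c + a*(c + a*z1) - z1) - (c + a*(c + a*z2) - z2)"
    by (simp add: algebra_simps)
  also have "\<dots> = 0" using assms(1,2) by simp
  finally have "(a*a - 1)*(z1 - z2) = 0" .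
  then have "a*a - 1 = 0" using assms(3) by simp
  moreover have "(a - 1)*(a + 1) = a*a - 1" by (simp add: algebra_simps)
  ultimately have "(a - 1)*(a + 1) = 0" by simp
  then show ?thesis by (simp add: eq_neg_iff_add_eq_0)
qed

lemma alg3:
  fixes a bb d g z u :: complex
  assumes "d + g*z \<noteq> 0" "d + g*u \<noteq> 0" "u = (bb + a*z)/(d+g*z)" "(bb + a*u)/(d + g*u) = z"
  shows "(a + d) * (bb + (a - d)*z - g*z*z) = 0"
proof -
  have h1: "u*(d+g*z) = bb + a*z" using assms(1,3) by simp
  have h2: "bb + a*u = z*(d+g*u)" using assms(2,4) by (simp add: divide_eq_eq)
  show ?thesis using h1 h2 by algebra
qed

lemma alg4:
  fixes a bb g z :: complex
  assumes "g \<noteq> 0" "z \<noteq> a/g"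
  shows "(bb + a*z)/(-a + g*z) = a/g + ((bb*g + a*a)/(g*g))/(z - a/g)"
proof -
  have gz: "g*z - a \<noteq> 0"
  proof
    assume "g*z - a = 0"
    then have "z = a/g" using assms(1) by (simp add: eq_divide_eq mult.commute)
    then show False using assms(2) by contradiction
  qed
  have e1: "z - a/g = (g*z - a)/g" using assms(1) by (simp add: diff_divide_eq_iff mult.commute)
  have e2: "-a + g*z = g*z - a" by simp
  have e3: "((bb*g + a*a)/(g*g))/((g*z - a)/g) = (bb*g + a*a)/(g*(g*z - a))"
  proof -
    have x1: "g * ((bb*g + a*a)/(g*g)) = (bb*g + a*a)/g" using assms(1) by simp
    have "((bb*g + a*a)/(g*g))/((g*z - a)/g) = (g * ((bb*g + a*a)/(g*g))) / (g*z - a)"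
      by (simp only: divide_divide_eq_right times_divide_eq_left mult.commute)
    also have "\<dots> = ((bb*g + a*a)/g) / (g*z - a)" unfolding x1 ..
    also have "\<dots> = (bb*g + a*a)/(g*(g*z - a))" by (simp only: divide_divide_eq_left)
    finally show ?thesis .
  qed
  have e4: "a/g + (bb*g + a*a)/(g*(g*z - a)) = (a*(g*z-a) + (bb*g + a*a))/(g*(g*z - a))"
    using assms(1) gz by (simp add: add_divide_distrib)
  have e5: "a*(g*z-a) + (bb*g + a*a) = g * (bb + a*z)" by (simp add: algebra_simps)
  have e6: "(g * (bb + a*z))/(g*(g*z - a)) = (bb + a*z)/(g*z - a)" using assms(1) by simp
  show ?thesis unfolding e1 e2 e3 e4 e5 e6 ..
qed




lemma infinite_curve: "finite F \<Longrightarrow> infinite (curve F)"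
  unfolding curve_def using Diff_infinite_finite[OF _ infinite_UNIV_char_0] by blast

lemma two_points:
  assumes "infinite (S::complex set)" obtains z1 z2 where "z1 \<in> S" "z2 \<in> S" "z1 \<noteq> z2"
proof -
  obtain z1 where z1: "z1 \<in> S" using assms by (metis finite.emptyI equals0I)
  have "infinite (S - {z1})" using assms by simp
  then obtain z2 where z2: "z2 \<in> S - {z1}" by (metis finite.emptyI equals0I)
  show ?thesis using that z1 z2 by blast
qed

lemma classify:
  assumes fin: "finite F" and inv: "curve_involution (curve F) \<sigma>"
  shows "(\<exists>c. \<forall>z\<in>curve F. \<sigma> z = c - z) \<or>
         (\<exists>b k. b \<in> F \<and> k \<noteq> 0 \<and> (\<forall>z\<in>curve F. \<sigma> z = b + k / (z - b)))"
proof -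
  define S where "S = curve F"
  have infS: "infinite S" unfolding S_def using infinite_curve[OF fin] .
  have SF: "z \<in> S \<longleftrightarrow> z \<notin> F" for z unfolding S_def curve_def by simp
  have maps: "\<And>z. z \<in> S \<Longrightarrow> \<sigma> z \<in> S" and reg: "regular_on S \<sigma>"
    and invol: "\<And>z. z \<in> S \<Longrightarrow> \<sigma> (\<sigma> z) = z" and nonid: "\<exists>z\<in>S. \<sigma> z \<noteq> z"
    using inv unfolding curve_involution_def curve_aut_def curve_morphism_def S_def by blast+
  have injS: "inj_on \<sigma> S"
  proof (rule inj_onI)
    fix x y assume "x \<in> S" "y \<in> S" "\<sigma> x = \<sigma> y"
    then show "x = y" using invol by metis
  qed
  obtain p0 q0 where pq0: "\<And>z. z \<in> S \<Longrightarrow> poly q0 z \<noteq> 0 \<and> \<sigma> z = poly p0 z / poly q0 z"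
    using reg unfolding regular_on_def by blast
  obtain z1 z2 where z12: "z1 \<in> S" "z2 \<in> S" "z1 \<noteq> z2" using two_points[OF infS] by blast
  have q00: "q0 \<noteq> 0" using pq0[OF z12(1)] by auto
  define g where "g = gcd p0 q0"
  define p where "p = p0 div g"
  define q where "q = q0 div g"
  have cop: "coprime p q" unfolding p_def q_def g_def using q00 by (intro div_gcd_coprime) simp
  have p0: "p0 = p * g" unfolding p_def g_def by simp
  have q0: "q0 = q * g" unfolding q_def g_def by simp
  have pq: "poly q z \<noteq> 0 \<and> \<sigma> z = poly p z / poly q z" if "z \<in> S" for z
  proof -
    have "poly q z * poly g z \<noteq> 0" using pq0[OF that] unfolding q0 by simp
    then have a: "poly q z \<noteq> 0" "poly g z \<noteq> 0" by auto
    have "\<sigma> z = (poly p z * poly g z) / (poly q z * poly g z)" using pq0[OF that] unfolding p0 q0 by simp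
    also have "\<dots> = poly p z / poly q z" using a(2) by (rule mult_divide_mult_cancel_right)
    finally show ?thesis using a by blast
  qed
  have inj2: "inj_on (\<lambda>z. poly p z / poly q z) (UNIV - F)"
    using injS unfolding S_def curve_def by (rule inj_on_cong[THEN iffD1, rotated]) (use pq S_def curve_def in auto)
  have nz2: "\<forall>z\<in>UNIV - F. poly q z \<noteq> 0" using pq SF by auto
  have degs: "degree p \<le> 1" "degree q \<le> 1" using deg_le1[OF fin cop nz2 inj2] by auto
  define \<alpha> where "\<alpha> = coeff p 1"
  define \<beta> where "\<beta> = coeff p 0"
  define \<gamma> where "\<gamma> = coeff q 1"
  define \<delta> where "\<delta> = coeff q 0"
  have sig: "\<sigma> z = (\<beta> + \<alpha> * z) / (\<delta> + \<gamma> * z)" "\<delta> + \<gamma> * z \<noteq> 0" if "z \<in> S" for z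
    using pq[OF that] lin_poly[OF degs(1), of z] lin_poly[OF degs(2), of z]
    unfolding \<alpha>_def \<beta>_def \<gamma>_def \<delta>_def by auto
  show ?thesis
  proof (cases "\<gamma> = 0")
    case True
    have d0: "\<delta> \<noteq> 0" using sig(2)[OF z12(1)] True by simp
    define a where "a = \<alpha> / \<delta>"
    define c where "c = \<beta> / \<delta>"
    have s1: "\<sigma> z = c + a * z" if "z \<in> S" for z
    proof -
      have "\<sigma> z = (\<beta> + \<alpha> * z) / \<delta>" using sig(1)[OF that] True by simp
      also have "\<dots> = c + a * z" unfolding a_def c_def by (simp add: add_divide_distrib)
      finally show ?thesis .
    qed
    have s2: "c + a * (c + a * z) = z" if "z \<in> S" for z
    proof -
      have "z = \<sigma> (\<sigma> z)" using invol[OF that] by simp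
      also have "\<dots> = c + a * \<sigma> z" using s1[OF maps[OF that]] .
      also have "\<dots> = c + a * (c + a * z)" using s1[OF that] by simp
      finally show ?thesis by simp
    qed
    have "a = 1 \<or> a = -1" using alg1[OF s2[OF z12(1)] s2[OF z12(2)] z12(3)] .
    moreover have "a \<noteq> 1"
    proof
      assume a1: "a = 1"
      have "c + (c + z1) = z1" using s2[OF z12(1)] unfolding a1 by simp
      then have c0: "c = 0" by simp
      have "\<forall>z\<in>S. \<sigma> z = z" using s1 unfolding a1 c0 by simp
      then show False using nonid by blast
    qed
    ultimately have am: "a = -1" by blast
    have "\<forall>z\<in>curve F. \<sigma> z = c - z" using s1 unfolding am S_def by simp
    then show ?thesis by blast
  next
    case False
    define b where "b = \<alpha> / \<gamma>"
    have key: "(\<alpha> + \<delta>) * (\<beta> + (\<alpha> - \<delta>)*z - \<gamma>*z*z) = 0" if "z \<in> S" for z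
      using alg3[OF sig(2)[OF that] sig(2)[OF maps[OF that]] sig(1)[OF that] ] invol[OF that] sig(1)[OF maps[OF that]]
      by simp
    have ad: "\<alpha> + \<delta> = 0"
    proof (rule ccontr)
      assume n: "\<alpha> + \<delta> \<noteq> 0"
      define P where "P = [:\<beta>, \<alpha> - \<delta>, -\<gamma>:]"
      have P0: "P \<noteq> 0" unfolding P_def using False by simp
      have "S \<subseteq> {x. poly P x = 0}"
      proof
        fix z assume "z \<in> S"
        then have "\<beta> + (\<alpha> - \<delta>)*z - \<gamma>*z*z = 0" using key n by simp
        moreover have "poly P z = \<beta> + (\<alpha> - \<delta>)*z - \<gamma>*z*z" unfolding P_def by (simp add: algebra_simps)
        ultimately show "z \<in> {x. poly P x = 0}" by simp
      qed
      then show False using poly_roots_finite[OF P0] infS finite_subset by blast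
    qed
    then have dm: "\<delta> = -\<alpha>" by (simp add: eq_neg_iff_add_eq_0 add.commute)
    have bF: "b \<in> F"
    proof (rule ccontr)
      assume "b \<notin> F"
      then have "b \<in> S" using SF by simp
      from sig(2)[OF this] have "\<delta> + \<gamma> * b \<noteq> 0" .
      moreover have "\<delta> + \<gamma> * b = 0" unfolding b_def dm using False by simp
      ultimately show False by contradiction
    qed
    define k where "k = (\<beta>*\<gamma> + \<alpha>*\<alpha>)/(\<gamma>*\<gamma>)"
    have s1: "\<sigma> z = b + k / (z - b)" if "z \<in> S" for z
    proof -
      have "z \<noteq> b" using that bF SF by blast
      then have zb: "z \<noteq> \<alpha>/\<gamma>" unfolding b_def .
      have "\<sigma> z = (\<beta> + \<alpha> * z) / (-\<alpha> + \<gamma> * z)" using sig(1)[OF that] unfolding dm .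
      also have "\<dots> = b + k / (z - b)" unfolding b_def k_def by (rule alg4[OF False zb])
      finally show ?thesis .
    qed
    have "k \<noteq> 0"
    proof
      assume "k = 0"
      then have "\<sigma> z1 = \<sigma> z2" using s1[OF z12(1)] s1[OF z12(2)] by simp
      then show False using injS z12 inj_onD by metis
    qed
    then show ?thesis using s1 bF unfolding S_def by blast
  qed
qed



lemma atom1:
  fixes w a k A B :: complex
  assumes "a * A = k" "w * B = k"
  shows "(w - a) * (w - A) = w * ((w + B) - (a + A))"
proof -
  have "(w - a) * (w - A) - w * ((w + B) - (a + A)) = a*A - w*B" by (simp add: algebra_simps)
  then have "(w - a) * (w - A) - w * ((w + B) - (a + A)) = 0" using assms by simp
  then show ?thesis by simp
qed

lemma alg5:
  fixes w a k :: complex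
  assumes "w \<noteq> 0" "a \<noteq> 0" "w + k/w = a + k/a"
  shows "w = a \<or> w = k/a"
proof -
  have "(w - a) * (w - k/a) = w * ((w + k/w) - (a + k/a))"
    by (rule atom1) (use assms(1,2) in simp_all)
  then have "(w - a) * (w - k/a) = 0" using assms(3) by simp
  then show ?thesis by simp
qed

lemma alg6:
  fixes w a k :: complex
  assumes "w \<noteq> 0" "a \<noteq> 0" "w \<noteq> a" "w \<noteq> k/a"
  shows "1/(w - a) = (w - k/a) * (1/w) * (1/((w + k/w) - (a + k/a)))"
proof -
  have m: "w * ((w + k/w) - (a + k/a)) = (w - a) * (w - k/a)"
    by (rule atom1[symmetric]) (use assms(1,2) in simp_all)
  have n1: "w - a \<noteq> 0" "w - k/a \<noteq> 0" using assms(3,4) by auto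
  have "(w - k/a) * (1/w) * (1/((w + k/w) - (a + k/a))) = (w - k/a) / (w * ((w + k/w) - (a + k/a)))"
    by simp
  also have "\<dots> = (w - k/a) / ((w - a) * (w - k/a))" unfolding m ..
  also have "\<dots> = 1/(w - a)" using n1 by simp
  finally show ?thesis by simp
qed

lemma atom2:
  fixes w k B :: complex
  assumes "w * B = k"
  shows "(w - B)^2 = (w + B)^2 - 4*k" "(w + B) - (w - B) = 2*B" "(w + B) + (w - B) = 2*w"
proof -
  have "(w - B)^2 - ((w + B)^2 - 4*k) = 4*k - 4*(w*B)" by (simp add: algebra_simps power2_eq_square)
  then have "(w - B)^2 - ((w + B)^2 - 4*k) = 0" using assms by simp
  then show "(w - B)^2 = (w + B)^2 - 4*k" by simp
  show "(w + B) - (w - B) = 2*B" by simp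
  show "(w + B) + (w - B) = 2*w" by simp
qed

lemma alg7:
  fixes w k :: complex
  assumes "w \<noteq> 0" "k \<noteq> 0"
  shows "(w - k/w)^2 = (w + k/w)^2 - 4*k" "k/(k/w) = w"
    "1/w = ((w + k/w) - (w - k/w)) / (2*k)" "w = ((w + k/w) + (w - k/w))/2"
proof -
  have wB: "w * (k/w) = k" using assms by simp
  show "(w - k/w)^2 = (w + k/w)^2 - 4*k" using atom2(1)[OF wB] .
  show "k/(k/w) = w" using assms by simp
  show "1/w = ((w + k/w) - (w - k/w)) / (2*k)" unfolding atom2(2)[OF wB] using assms by simp
  show "w = ((w + k/w) + (w - k/w))/2" unfolding atom2(3)[OF wB] by simp
qed



lemma reg_prod: "finite A \<Longrightarrow> (\<And>a. a \<in> A \<Longrightarrow> regular_on S (g a)) \<Longrightarrow> regular_on S (\<lambda>z. \<Prod>a\<in>A. g a z)"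
proof (induction A rule: finite_induct)
  case empty then show ?case using reg_const[of S 1] by simp
next
  case (insert x A)
  then have "regular_on S (\<lambda>z. g x z * (\<Prod>a\<in>A. g a z))" by (intro reg_mult) auto
  then show ?case using insert by simp
qed

lemma eval2_a: "eval2 [:[:c,-1:]:] x y = c - x"
  by (simp add: eval2_def map_poly_pCons)
lemma eval2_b: "eval2 [:0,[:e:]:] x y = e * y"
  by (simp add: eval2_def map_poly_pCons)

lemma case_a:
  assumes fin: "finite F" and inv: "curve_involution (curve F) \<sigma>"
    and s: "\<forall>z\<in>curve F. \<sigma> z = c - z"
  shows "\<exists>\<tau> \<Phi>. closed_embedding_A2 (curve F) \<tau> \<and> A2_involution \<Phi> \<and>
           (\<forall>z\<in>curve F. \<Phi> (\<tau> z) = \<tau> (\<sigma> z))"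
proof -
  define S where "S = curve F"
  have SF: "z \<in> S \<longleftrightarrow> z \<notin> F" for z unfolding S_def curve_def by simp
  have maps: "\<And>z. z \<in> S \<Longrightarrow> \<sigma> z \<in> S"
    using inv unfolding curve_involution_def curve_aut_def curve_morphism_def S_def by blast
  have clos: "c - a \<in> F" if "a \<in> F" for a
  proof (rule ccontr)
    assume "c - a \<notin> F"
    then have "c - a \<in> S" using SF by simp
    then have "\<sigma> (c - a) \<in> S" using maps by blast
    moreover have "\<sigma> (c - a) = a" using s \<open>c - a \<in> S\<close> unfolding S_def by simp
    ultimately show False using that SF by simp
  qed
  define h where "h = (\<lambda>a::complex. c - a)"
  have imF: "h ` F = F"
  proof
    show "h ` F \<subseteq> F" unfolding h_def using clos by blast
    show "F \<subseteq> h ` F"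
    proof
      fix a assume "a \<in> F"
      then have "c - a \<in> F" by (rule clos)
      moreover have "a = h (c - a)" unfolding h_def by simp
      ultimately show "a \<in> h ` F" by blast
    qed
  qed
  have injh: "inj_on h F" unfolding h_def by (rule inj_onI) simp
  define Q where "Q = (\<lambda>z. \<Prod>a\<in>F. z - a)"
  define e where "e = (-1::complex) ^ card F"
  have ee: "e * e = 1" unfolding e_def by (simp flip: power_add power_mult_distrib)
  have Qs: "Q (c - z) = e * Q z" for z
  proof -
    have "Q z = (\<Prod>a\<in>h ` F. z - a)" unfolding Q_def imF ..
    also have "\<dots> = (\<Prod>a\<in>F. z - h a)" using prod.reindex[OF injh] by simp
    finally have q1: "Q z = (\<Prod>a\<in>F. z - (c - a))" unfolding h_def .
    have "Q (c - z) = (\<Prod>a\<in>F. (-1) * (z - (c - a)))" unfolding Q_def by (rule prod.cong) simp_all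
    also have "\<dots> = (\<Prod>a\<in>F. (-1::complex)) * (\<Prod>a\<in>F. z - (c - a))" by (rule prod.distrib)
    also have "\<dots> = e * Q z" unfolding q1 e_def by simp
    finally show ?thesis .
  qed
  have Qnz: "Q z \<noteq> 0" if "z \<in> S" for z
    unfolding Q_def using that SF fin by (simp add: prod_zero_iff)
  define \<tau> where "\<tau> = (\<lambda>z. (z, 1 / Q z))"
  define \<Phi> where "\<Phi> = poly_map2 [:[:c,-1:]:] [:0,[:e:]:]"
  have \<Phi>v: "\<Phi> (x, y) = (c - x, e * y)" for x y unfolding \<Phi>_def poly_map2_def by (simp add: eval2_a eval2_b)
  have \<Phi>\<Phi>: "\<Phi> (\<Phi> v) = v" for v
  proof -
    obtain x y where v: "v = (x, y)" by fastforce
    have "e * (e * y) = y" using ee by (simp add: mult.assoc[symmetric])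
    then show ?thesis unfolding v \<Phi>v by simp
  qed
  have invo: "A2_involution \<Phi>"
    unfolding A2_involution_def A2_aut_def
  proof (intro conjI exI)
    show "\<Phi> = poly_map2 [:[:c,-1:]:] [:0,[:e:]:]" unfolding \<Phi>_def ..
    show "\<forall>v. poly_map2 [:[:c, - 1:]:] [:0, [:e:]:] (\<Phi> v) = v \<and> \<Phi> (poly_map2 [:[:c, - 1:]:] [:0, [:e:]:] v) = v"
      using \<Phi>\<Phi> unfolding \<Phi>_def by simp
    show "\<Phi> \<circ> \<Phi> = id" using \<Phi>\<Phi> by (simp add: fun_eq_iff)
    show "\<Phi> \<noteq> id"
    proof
      assume "\<Phi> = id"
      then have "\<Phi> (c/2 + 1, 0) = (c/2 + 1, 0)" by simp
      then have "c - (c/2 + 1) = c/2 + 1" unfolding \<Phi>v by simp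
      then show False by simp
    qed
  qed
  have eqv: "\<forall>z\<in>curve F. \<Phi> (\<tau> z) = \<tau> (\<sigma> z)"
  proof
    fix z assume z: "z \<in> curve F"
    have "\<sigma> z = c - z" using s z by blast
    moreover have "e / Q z = 1 / (e * Q z)"
    proof -
      have "e \<noteq> 0" using ee by auto
      have ie: "1 / e = e" using ee \<open>e \<noteq> 0\<close> by (simp add: divide_eq_eq)
      have "1 / (e * Q z) = (1 / e) / Q z" by (simp only: divide_divide_eq_left)
      then show ?thesis unfolding ie by simp
    qed
    ultimately show "\<Phi> (\<tau> z) = \<tau> (\<sigma> z)" unfolding \<tau>_def \<Phi>v using Qs[of z] by simp
  qed
  have emb: "closed_embedding_A2 (curve F) \<tau>"
  proof (rule embed[OF fin])
    show "regular_on (curve F) (fst \<circ> \<tau>)" unfolding \<tau>_def o_def using reg_id by simp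
    have "regular_on S (\<lambda>z. 1 / Q z)"
      unfolding Q_def by (rule reg_inv[OF reg_prod[OF fin reg_diff[OF reg_id reg_const]]]) (use Qnz Q_def in simp)
    then show "regular_on (curve F) (snd \<circ> \<tau>)" unfolding \<tau>_def o_def S_def by simp
    show az: "alg (curve F) \<tau> (\<lambda>z. z)" using alg_fst[of "curve F" \<tau>] unfolding \<tau>_def by simp
    fix a assume aF: "a \<in> F"
    have "alg (curve F) \<tau> (\<lambda>z. (\<Prod>a'\<in>F - {a}. z - a') * snd (\<tau> z))"
      by (intro alg_mult alg_snd alg_prod) (use fin in \<open>auto intro!: alg_diff az alg_const\<close>)
    then show "alg (curve F) \<tau> (\<lambda>z. 1 / (z - a))"
    proof (rule alg_cong)
      fix z assume z: "z \<in> curve F"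
      have za: "z - a \<noteq> 0" using z aF unfolding curve_def by auto
      have "Q z = (z - a) * (\<Prod>a'\<in>F - {a}. z - a')" unfolding Q_def using fin aF by (rule prod.remove)
      then show "(\<Prod>a'\<in>F - {a}. z - a') * snd (\<tau> z) = 1 / (z - a)"
      proof -
        have "Q z \<noteq> 0" using Qnz[of z] z unfolding S_def by blast
        with \<open>Q z = _\<close> show ?thesis unfolding \<tau>_def using za by simp
      qed
    qed
  qed
  show ?thesis using emb invo eqv by blast
qed



lemma coprime_no_root:
  fixes p q :: "complex poly"
  assumes p0: "p \<noteq> 0" and nr: "\<And>x. poly p x = 0 \<Longrightarrow> poly q x \<noteq> 0"
  shows "coprime p q"
proof (rule coprimeI)
  fix d assume dp: "d dvd p" and dq: "d dvd q"
  then have d0: "d \<noteq> 0" using p0 by auto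
  show "is_unit d"
  proof (rule ccontr)
    assume "\<not> is_unit d"
    then have "degree d \<noteq> 0" using is_unit_iff_degree[OF d0] by simp
    then have "\<not> constant (poly d)" by (simp add: constant_degree)
    then obtain x where x: "poly d x = 0" using fundamental_theorem_of_algebra by blast
    obtain m1 where m1: "p = d * m1" using dp by (rule dvdE)
    obtain m2 where m2: "q = d * m2" using dq by (rule dvdE)
    have "poly p x = 0" unfolding m1 using x by simp
    moreover have "poly q x = 0" unfolding m2 using x by simp
    ultimately show False using nr by blast
  qed
qed

lemma poly_lin: "poly [:-c,1:] x = x - (c::complex)" by simp

lemma poly_prod_lin: "poly (\<Prod>c\<in>A. [:-c,1:]) x = (\<Prod>c\<in>A. x - (c::complex))"
  by (simp add: poly_prod)

lemma prod_lin_nz: "finite A \<Longrightarrow> x \<notin> A \<Longrightarrow> (\<Prod>c\<in>A. x - (c::complex)) \<noteq> 0"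
  by (simp add: prod_zero_iff)

lemma eval2_c: "eval2 [:[:0,-1:]:] x y = - x"
  by (simp add: eval2_def map_poly_pCons)

lemma case_b:
  assumes fin: "finite F" and inv: "curve_involution (curve F) \<sigma>"
    and bF: "b \<in> F" and k0: "k \<noteq> 0" and s: "\<forall>z\<in>curve F. \<sigma> z = b + k / (z - b)"
  shows "\<exists>\<tau> \<Phi>. closed_embedding_A2 (curve F) \<tau> \<and> A2_involution \<Phi> \<and>
           (\<forall>z\<in>curve F. \<Phi> (\<tau> z) = \<tau> (\<sigma> z))"
proof -
  define S where "S = curve F"
  have SF: "z \<in> S \<longleftrightarrow> z \<notin> F" for z unfolding S_def curve_def by simp
  have maps: "\<And>z. z \<in> S \<Longrightarrow> \<sigma> z \<in> S"
    using inv unfolding curve_involution_def curve_aut_def curve_morphism_def S_def by blast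
  have sS: "\<sigma> z = b + k / (z - b)" if "z \<in> S" for z using s that unfolding S_def by blast
  have clos: "b + k / (a - b) \<in> F" if "a \<in> F" "a \<noteq> b" for a
  proof (rule ccontr)
    define z0 where "z0 = b + k / (a - b)"
    assume "b + k / (a - b) \<notin> F"
    then have z0S: "z0 \<in> S" using SF unfolding z0_def by simp
    have ab: "a - b \<noteq> 0" using that by simp
    have "z0 - b = k / (a - b)" unfolding z0_def by simp
    then have "\<sigma> z0 = b + k / (k / (a - b))" using sS[OF z0S] by simp
    also have "k / (k / (a - b)) = a - b" using alg7(2)[OF ab k0] .
    finally have "\<sigma> z0 = a" by simp
    then show False using maps[OF z0S] that(1) SF by simp
  qed
  define W where "W = (\<lambda>z. z - b)"
  define tt where "tt = (\<lambda>z. W z + k / W z)"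
  define ss where "ss = (\<lambda>z. W z - k / W z)"
  have W0: "W z \<noteq> 0" if "z \<in> S" for z using that bF SF unfolding W_def by auto
  define T where "T = (\<lambda>a. (a - b) + k / (a - b)) ` (F - {b})"
  have finT: "finite T" unfolding T_def using fin by simp
  have tS: "tt z \<notin> T" if zS: "z \<in> S" for z
  proof
    assume "tt z \<in> T"
    then obtain a where a: "a \<in> F" "a \<noteq> b" and ta: "tt z = (a - b) + k / (a - b)" unfolding T_def by blast
    have "W z = a - b \<or> W z = k / (a - b)"
      by (rule alg5[OF W0[OF zS]]) (use a ta tt_def in simp_all)
    then show False
    proof
      assume "W z = a - b" then have "z = a" unfolding W_def by simp
      then show False using a zS SF by simp
    next
      assume "W z = k / (a - b)" then have "z = b + k / (a - b)" unfolding W_def by (metis add.commute diff_eq_eq)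
      then show False using clos[OF a] zS SF by simp
    qed
  qed
  define Rp where "Rp = (\<Prod>c\<in>T. [:-c,1:])"
  have Rv: "poly Rp x = (\<Prod>c\<in>T. x - c)" for x unfolding Rp_def by (rule poly_prod_lin)
  have Rnz: "poly Rp (tt z) \<noteq> 0" if "z \<in> S" for z unfolding Rv by (rule prod_lin_nz[OF finT tS[OF that]])
  define c1 where "c1 = 2 * csqrt k"
  define C where "C = {c1, -c1}"
  have c10: "c1 \<noteq> 0" unfolding c1_def using k0 by simp
  have finC: "finite C" unfolding C_def by simp
  define Ep where "Ep = (\<Prod>c\<in>C \<inter> T. [:-c,1:])"
  define Eq where "Eq = (\<Prod>c\<in>C - T. [:-c,1:])"
  have Ev: "poly Ep x = (\<Prod>c\<in>C \<inter> T. x - c)" for x unfolding Ep_def by (rule poly_prod_lin)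
  have Eqv: "poly Eq x = (\<Prod>c\<in>C - T. x - c)" for x unfolding Eq_def by (rule poly_prod_lin)
  have Enz: "poly Ep (tt z) \<noteq> 0" if "z \<in> S" for z unfolding Ev
    by (rule prod_lin_nz) (use finC tS[OF that] in auto)
  have EE: "poly Ep x * poly Eq x = x^2 - 4*k" for x
  proof -
    have "poly Ep x * poly Eq x = (\<Prod>c\<in>C. x - c)" unfolding Ev Eqv
      by (rule prod.Int_Diff[OF finC, symmetric])
    also have "\<dots> = (x - c1) * (x - (-c1))" unfolding C_def using c10 by simp
    also have "\<dots> = x^2 - c1^2" by (simp add: algebra_simps power2_eq_square)
    also have "c1^2 = 4 * k" unfolding c1_def by (simp add: power_mult_distrib)
    finally show ?thesis .
  qed
  have cop: "coprime Eq Rp"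
  proof (rule coprime_no_root)
    show "Eq \<noteq> 0" unfolding Eq_def using finC by (simp add: prod_zero_iff)
    fix x assume "poly Eq x = 0"
    then obtain c where "c \<in> C - T" "x = c" unfolding Eqv using finC by (auto simp: prod_zero_iff)
    then have "x \<notin> T" by simp
    then show "poly Rp x \<noteq> 0" unfolding Rv by (rule prod_lin_nz[OF finT])
  qed
  obtain u v where uv: "u * Eq + v * Rp = 1"
  proof -
    have "gcd Eq Rp = 1" using cop unfolding coprime_iff_gcd_eq_1 .
    then have "fst (bezout_coefficients Eq Rp) * Eq + snd (bezout_coefficients Eq Rp) * Rp = 1"
      using bezout_coefficients_fst_snd[of Eq Rp] by simp
    then show ?thesis using that by blast
  qed
  define xx where "xx = (\<lambda>z. ss z / (poly Rp (tt z) * poly Ep (tt z)))"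
  define \<tau> where "\<tau> = (\<lambda>z. (xx z, tt z))"
  define \<Phi> where "\<Phi> = poly_map2 [:[:0,-1:]:] [:0,1:]"
  have \<Phi>v: "\<Phi> (x, y) = (- x, y)" for x y unfolding \<Phi>_def poly_map2_def by (simp add: eval2_c eval2_y)
  have \<Phi>\<Phi>: "\<Phi> (\<Phi> v) = v" for v
  proof -
    obtain x y where v: "v = (x, y)" by fastforce
    show ?thesis unfolding v \<Phi>v by simp
  qed
  have invo: "A2_involution \<Phi>"
    unfolding A2_involution_def A2_aut_def
  proof (intro conjI exI)
    show "\<Phi> = poly_map2 [:[:0,-1:]:] [:0,1:]" unfolding \<Phi>_def ..
    show "\<forall>v. poly_map2 [:[:0, - 1:]:] [:0, 1:] (\<Phi> v) = v \<and> \<Phi> (poly_map2 [:[:0, - 1:]:] [:0, 1:] v) = v"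
      using \<Phi>\<Phi> unfolding \<Phi>_def by simp
    show "\<Phi> \<circ> \<Phi> = id" using \<Phi>\<Phi> by (simp add: fun_eq_iff)
    show "\<Phi> \<noteq> id"
    proof
      assume "\<Phi> = id"
      then have "\<Phi> (1, 0) = (1, 0)" by simp
      then show False unfolding \<Phi>v by simp
    qed
  qed
  have eqv: "\<forall>z\<in>curve F. \<Phi> (\<tau> z) = \<tau> (\<sigma> z)"
  proof
    fix z assume "z \<in> curve F"
    then have zS: "z \<in> S" unfolding S_def .
    have w0: "W z \<noteq> 0" using W0[OF zS] .
    have Ws: "W (\<sigma> z) = k / W z" unfolding W_def using sS[OF zS] by simp
    have kk: "k / (k / W z) = W z" using alg7(2)[OF w0 k0] .
    have t1: "tt (\<sigma> z) = tt z" unfolding tt_def Ws kk by simp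
    have s1: "ss (\<sigma> z) = - ss z" unfolding ss_def Ws kk by simp
    have x1: "xx (\<sigma> z) = - xx z" unfolding xx_def t1 s1 by simp
    show "\<Phi> (\<tau> z) = \<tau> (\<sigma> z)" unfolding \<tau>_def \<Phi>v x1 t1 ..
  qed
  have rW: "regular_on S W" unfolding W_def by (intro reg_diff reg_id reg_const)
  have rkW: "regular_on S (\<lambda>z. k / W z)" by (intro reg_div reg_const rW W0)
  have rt: "regular_on S tt" unfolding tt_def by (intro reg_add rW rkW)
  have rs: "regular_on S ss" unfolding ss_def by (intro reg_diff rW rkW)
  have rx: "regular_on S xx" unfolding xx_def
    by (intro reg_div rs reg_mult reg_poly rt) (use Rnz Enz in simp)
  have emb: "closed_embedding_A2 (curve F) \<tau>"
  proof (rule embed[OF fin])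
    show "regular_on (curve F) (fst \<circ> \<tau>)" using rx unfolding \<tau>_def o_def S_def by simp
    show "regular_on (curve F) (snd \<circ> \<tau>)" using rt unfolding \<tau>_def o_def S_def by simp
    have ax: "alg S \<tau> xx" using alg_fst[of S \<tau>] unfolding \<tau>_def by simp
    have at: "alg S \<tau> tt" using alg_snd[of S \<tau>] unfolding \<tau>_def by simp
    have as: "alg S \<tau> ss"
    proof -
      have "alg S \<tau> (\<lambda>z. xx z * (poly Rp (tt z) * poly Ep (tt z)))"
        by (intro alg_mult ax alg_poly at)
      then show ?thesis
      proof (rule alg_cong)
        fix z assume zS: "z \<in> S"
        have "poly Rp (tt z) * poly Ep (tt z) \<noteq> 0" using Rnz[OF zS] Enz[OF zS] by simp
        then show "xx z * (poly Rp (tt z) * poly Ep (tt z)) = ss z" unfolding xx_def by simp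
      qed
    qed
    have aw: "alg S \<tau> W"
    proof -
      have "alg S \<tau> (\<lambda>z. (tt z + ss z) * (1/2))" by (intro alg_mult alg_add at as alg_const)
      then show ?thesis
      proof (rule alg_cong)
        fix z assume zS: "z \<in> S"
        show "(tt z + ss z) * (1/2) = W z" unfolding tt_def ss_def
          using alg7(4)[OF W0[OF zS] k0] by simp
      qed
    qed
    have aiw: "alg S \<tau> (\<lambda>z. 1 / W z)"
    proof -
      have "alg S \<tau> (\<lambda>z. (tt z - ss z) * (1/(2*k)))" by (intro alg_mult alg_diff at as alg_const)
      then show ?thesis
      proof (rule alg_cong)
        fix z assume zS: "z \<in> S"
        show "(tt z - ss z) * (1/(2*k)) = 1 / W z" unfolding tt_def ss_def
          using alg7(3)[OF W0[OF zS] k0] by simp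
      qed
    qed
    have aER: "alg S \<tau> (\<lambda>z. poly Eq (tt z) / poly Rp (tt z))"
    proof -
      have "alg S \<tau> (\<lambda>z. xx z * ss z)" by (intro alg_mult ax as)
      then show ?thesis
      proof (rule alg_cong)
        fix z assume zS: "z \<in> S"
        have sq: "ss z * ss z = poly Ep (tt z) * poly Eq (tt z)"
          unfolding EE tt_def ss_def using alg7(1)[OF W0[OF zS] k0] by (simp add: power2_eq_square)
        have e0: "poly Ep (tt z) \<noteq> 0" using Enz[OF zS] .
        have "xx z * ss z = (ss z * ss z) / (poly Rp (tt z) * poly Ep (tt z))" unfolding xx_def by simp
        also have "\<dots> = (poly Eq (tt z) * poly Ep (tt z)) / (poly Rp (tt z) * poly Ep (tt z))"
          unfolding sq by (simp only: mult.commute)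
        also have "\<dots> = poly Eq (tt z) / poly Rp (tt z)" using e0 by (rule mult_divide_mult_cancel_right)
        finally show "xx z * ss z = poly Eq (tt z) / poly Rp (tt z)" .
      qed
    qed
    have aiR: "alg S \<tau> (\<lambda>z. 1 / poly Rp (tt z))"
    proof -
      have "alg S \<tau> (\<lambda>z. poly u (tt z) * (poly Eq (tt z) / poly Rp (tt z)) + poly v (tt z))"
        by (intro alg_add alg_mult alg_poly at aER)
      then show ?thesis
      proof (rule alg_cong)
        fix z assume zS: "z \<in> S"
        define X where "X = tt z"
        have r0: "poly Rp X \<noteq> 0" using Rnz[OF zS] unfolding X_def .
        have e: "poly u X * poly Eq X + poly v X * poly Rp X = 1"
          using arg_cong[OF uv, of "\<lambda>p. poly p X"] by simp
        have "poly u X * (poly Eq X / poly Rp X) + poly v X = (poly u X * poly Eq X + poly v X * poly Rp X) / poly Rp X"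
          using r0 by (simp add: add_divide_distrib)
        also have "\<dots> = 1 / poly Rp X" unfolding e ..
        finally show "poly u (tt z) * (poly Eq (tt z) / poly Rp (tt z)) + poly v (tt z) = 1 / poly Rp (tt z)"
          unfolding X_def .
      qed
    qed
    have ait: "alg S \<tau> (\<lambda>z. 1 / (tt z - t0))" if t0: "t0 \<in> T" for t0
    proof -
      have "alg S \<tau> (\<lambda>z. (\<Prod>c\<in>T - {t0}. tt z - c) * (1 / poly Rp (tt z)))"
        by (intro alg_mult aiR alg_prod) (use finT in \<open>auto intro!: alg_diff at alg_const\<close>)
      then show ?thesis
      proof (rule alg_cong)
        fix z assume zS: "z \<in> S"
        have r0: "poly Rp (tt z) \<noteq> 0" using Rnz[OF zS] .
        have "poly Rp (tt z) = (tt z - t0) * (\<Prod>c\<in>T - {t0}. tt z - c)"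
          unfolding Rv using finT t0 by (rule prod.remove)
        then show "(\<Prod>c\<in>T - {t0}. tt z - c) * (1 / poly Rp (tt z)) = 1 / (tt z - t0)"
          using r0 by simp
      qed
    qed
    have azS: "alg S \<tau> (\<lambda>z. z)"
    proof -
      have "alg S \<tau> (\<lambda>z. b + W z)" by (intro alg_add alg_const aw)
      then show ?thesis by (rule alg_cong) (simp add: W_def)
    qed
    then show "alg (curve F) \<tau> (\<lambda>z. z)" unfolding S_def .
    fix a assume aF: "a \<in> F"
    show "alg (curve F) \<tau> (\<lambda>z. 1 / (z - a))"
    proof (cases "a = b")
      case True
      show ?thesis using aiw unfolding S_def W_def True .
    next
      case False
      define a' where "a' = a - b"
      have a'0: "a' \<noteq> 0" unfolding a'_def using False by simp
      have ta: "a' + k / a' \<in> T" unfolding T_def a'_def using aF False by blast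
      have "alg S \<tau> (\<lambda>z. (W z - k / a') * (1 / W z) * (1 / (tt z - (a' + k / a'))))"
        by (intro alg_mult alg_diff aw alg_const aiw ait[OF ta])
      then have "alg S \<tau> (\<lambda>z. 1 / (z - a))"
      proof (rule alg_cong)
        fix z assume zS: "z \<in> S"
        have n1: "W z \<noteq> a'" unfolding W_def a'_def using zS aF SF by auto
        have n2: "W z \<noteq> k / a'"
        proof
          assume "W z = k / a'"
          then have "z = b + k / (a - b)" unfolding W_def a'_def by (metis add.commute diff_eq_eq)
          then show False using clos[OF aF False] zS SF by simp
        qed
        have "1 / (W z - a') = (W z - k / a') * (1 / W z) * (1 / ((W z + k / W z) - (a' + k / a')))"
          by (rule alg6[OF W0[OF zS] a'0 n1 n2])
        moreover have "W z - a' = z - a" unfolding W_def a'_def by simp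
        ultimately show "(W z - k / a') * (1 / W z) * (1 / (tt z - (a' + k / a'))) = 1 / (z - a)"
          unfolding tt_def by simp
      qed
      then show ?thesis unfolding S_def .
    qed
  qed
  show ?thesis using emb invo eqv by blast
qed

theorem mainTheorem7:
  fixes F :: "complex set" and \<sigma> :: "complex \<Rightarrow> complex"
  assumes "finite F"
    and "curve_involution (curve F) \<sigma>"
  shows "\<exists>\<tau> \<Phi>. closed_embedding_A2 (curve F) \<tau> \<and> A2_involution \<Phi> \<and>
           (\<forall>z\<in>curve F. \<Phi> (\<tau> z) = \<tau> (\<sigma> z))"
proof -
  have "(\<exists>c. \<forall>z\<in>curve F. \<sigma> z = c - z) \<or>
         (\<exists>b k. b \<in> F \<and> k \<noteq> 0 \<and> (\<forall>z\<in>curve F. \<sigma> z = b + k / (z - b)))"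
    by (rule classify[OF assms])
  then show ?thesis
  proof
    assume "\<exists>c. \<forall>z\<in>curve F. \<sigma> z = c - z"
    then obtain c where c: "\<forall>z\<in>curve F. \<sigma> z = c - z" by blast
    show ?thesis by (rule case_a[OF assms c])
  next
    assume "\<exists>b k. b \<in> F \<and> k \<noteq> 0 \<and> (\<forall>z\<in>curve F. \<sigma> z = b + k / (z - b))"
    then obtain b k where bk: "b \<in> F" "k \<noteq> 0" "\<forall>z\<in>curve F. \<sigma> z = b + k / (z - b)" by blast
    show ?thesis by (rule case_b[OF assms bk])
  qed
qed

end
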